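(* Let $n>1$ be an integer and let $R$ be an $n$-adically closed ring. Assume that for every prime ideal $p\subset R$ and all $a,b\in R$ with $a\notin p$ and $b\in p$, the polynomial $T^n+aT^{n-1}+b\in R[T]$ has a root $\alpha\in R\setminus p$. Then for any two prime ideals $P,Q$ of $R$, either $P+Q=R$ or $P+Q$ is a prime ideal.
   Context: All rings are commutative with $1$. A ring $R$ is $n$-adically closed if every monic polynomial of degree $n$ with coefficients in $R$ has a root in $R$. *)

theory Defs
  imports "HOL-Algebra.Algebra"
begin

definition n_adically_closed :: "('a, 'b) ring_scheme \<Rightarrow> nat \<Rightarrow> bool" where
  "n_adically_closed R n \<longleftrightarrow>
     (\<forall>c \<in> {..<n} \<rightarrow> carrier R. \<exists>x \<in> carrier R.
        x [^]\<^bsub>R\<^esub> n \<oplus>\<^bsub>R\<^esub> (\<Oplus>\<^bsub>R\<^esub> i\<in>{..<n}. c i \<otimes>\<^bsub>R\<^esub> x [^]\<^bsub>R\<^esub> i) = \<zero>\<^bsub>R\<^esub>)"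

end

theory Submission
  imports Defs
begin

context cring
begin

lemma pow_diff_factor:
  assumes a: "a \<in> carrier R" and d: "d \<in> carrier R"
  shows "\<exists>G\<in>carrier R. a [^] (k::nat) \<ominus> d [^] k = (a \<ominus> d) \<otimes> G"
proof (induction k)
  case 0
  show ?case using a d by (intro bexI[of _ "\<zero>"]) (auto, algebra)
next
  case (Suc k)
  then obtain G where G: "G \<in> carrier R" "a [^] k \<ominus> d [^] k = (a \<ominus> d) \<otimes> G" by blast
  have A: "a [^] k \<in> carrier R" and D: "d [^] k \<in> carrier R" using a d by auto
  have "(a \<ominus> d) \<otimes> (G \<otimes> a \<oplus> d [^] k) = ((a \<ominus> d) \<otimes> G) \<otimes> a \<oplus> (a \<ominus> d) \<otimes> d [^] k"
    using a d G A D by algebra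
  also have "\<dots> = (a [^] k \<ominus> d [^] k) \<otimes> a \<oplus> (a \<ominus> d) \<otimes> d [^] k" using G by simp
  also have "\<dots> = a [^] k \<otimes> a \<ominus> d [^] k \<otimes> d"
    using a d A D by algebra
  finally show ?case using a d G A D by (intro bexI[of _ "G \<otimes> a \<oplus> d [^] k"]) auto
qed

lemma prime_pow:
  assumes "primeideal Q R" and a: "a \<in> carrier R" and "a [^] (k::nat) \<in> Q"
  shows "a \<in> Q"
  using assms(3)
proof (induction k)
  case 0
  interpret Q: primeideal Q R by fact
  from 0 have "Q = carrier R" using Q.one_imp_carrier by simp
  then show ?case using Q.I_notcarr by simp
next
  case (Suc k)
  interpret Q: primeideal Q R by fact
  from Suc.prems have "a [^] k \<otimes> a \<in> Q" by simp
  then have "a [^] k \<in> Q \<or> a \<in> Q" using Q.I_prime a by auto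
  then show ?case using Suc.IH by blast
qed

lemma set_add_mem: "z \<in> set_add R P Q \<longleftrightarrow> (\<exists>p\<in>P. \<exists>q\<in>Q. z = p \<oplus> q)"
  unfolding set_add_def' by auto

lemma lemmaA:
  fixes n :: nat
  assumes n: "n > 1"
    and hyp: "\<And>p a b. primeideal p R \<Longrightarrow> a \<in> carrier R \<Longrightarrow> b \<in> carrier R \<Longrightarrow> a \<notin> p \<Longrightarrow> b \<in> p \<Longrightarrow>
           \<exists>\<alpha> \<in> carrier R - p. \<alpha> [^] n \<oplus> a \<otimes> \<alpha> [^] (n - 1) \<oplus> b = \<zero>"
    and PP: "primeideal P R" and QQ: "primeideal Q R"
    and p0: "p0 \<in> P" "p0 \<notin> Q"
    and x: "x \<in> carrier R" and d: "d \<in> carrier R"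
    and xd: "x \<otimes> d [^] (n - 1) \<in> set_add R P Q"
  shows "x \<in> set_add R P Q \<or> d [^] (n - 1) \<in> set_add R P Q"
proof -
  interpret P: primeideal P R by fact
  interpret Q: primeideal Q R by fact
  define D where "D = d [^] (n - 1)"
  have Dc: "D \<in> carrier R" using d D_def by simp
  obtain p q where pq: "p \<in> P" "q \<in> Q" "x \<otimes> D = p \<oplus> q" using xd set_add_mem D_def by blast
  have pc: "p \<in> carrier R" and qc: "q \<in> carrier R" using pq P.Icarr Q.Icarr by auto
  have p0c: "p0 \<in> carrier R" using p0 P.Icarr by auto
  obtain p1 where p1: "p1 \<in> P" "x \<ominus> d \<oplus> p1 \<notin> Q"
  proof (cases "x \<ominus> d \<in> Q")
    case True
    have "x \<ominus> d \<oplus> p0 \<notin> Q"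
    proof
      assume h: "x \<ominus> d \<oplus> p0 \<in> Q"
      have e: "p0 = (x \<ominus> d \<oplus> p0) \<oplus> \<ominus> (x \<ominus> d)" using x d p0c by algebra
      have "(x \<ominus> d \<oplus> p0) \<oplus> \<ominus> (x \<ominus> d) \<in> Q" by (rule Q.a_closed[OF h Q.a_inv_closed[OF True]])
      then show False using p0 e by simp
    qed
    then show ?thesis using that p0 by blast
  next
    case False
    then show ?thesis using that[of "\<zero>"] x d by auto
  qed
  have p1c: "p1 \<in> carrier R" using p1 P.Icarr by auto
  define a where "a = x \<ominus> d \<oplus> p1"
  have ac: "a \<in> carrier R" using a_def x d p1c by simp
  obtain \<alpha> where al: "\<alpha> \<in> carrier R" "\<alpha> \<notin> Q" and eq: "\<alpha> [^] n \<oplus> a \<otimes> \<alpha> [^] (n - 1) \<oplus> \<ominus> q = \<zero>"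
    using hyp[OF QQ ac _ _ Q.a_inv_closed[OF pq(2)]] qc p1 a_def by auto
  define A where "A = \<alpha> [^] (n - 1)"
  have Ac: "A \<in> carrier R" using A_def al by simp
  have an: "\<alpha> [^] n = A \<otimes> \<alpha>" using n A_def by (metis Suc_diff_1 less_trans zero_less_one nat_pow_Suc)
  define s where "s = \<alpha> \<oplus> a"
  have sc: "s \<in> carrier R" using s_def al ac by simp
  have "A \<otimes> s = (A \<otimes> \<alpha> \<oplus> a \<otimes> A \<oplus> \<ominus> q) \<oplus> q" unfolding s_def using Ac al ac qc by algebra
  also have "\<dots> = q" using eq an A_def qc by (simp add: m_comm[OF ac Ac])
  finally have As: "A \<otimes> s = q" .
  have AQ: "A \<notin> Q" using prime_pow[OF QQ al(1)] al A_def by auto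
  have sQ: "s \<in> Q" using Q.I_prime[OF Ac sc] As pq AQ by auto
  obtain G where G: "G \<in> carrier R" "A \<ominus> D = (\<alpha> \<ominus> d) \<otimes> G"
    using pow_diff_factor[OF al(1) d] A_def D_def by blast
  have "(\<alpha> \<ominus> d) \<otimes> (s \<otimes> G \<oplus> D) = s \<otimes> ((\<alpha> \<ominus> d) \<otimes> G) \<oplus> (\<alpha> \<ominus> d) \<otimes> D"
    using al d sc G Dc by algebra
  also have "\<dots> = s \<otimes> (A \<ominus> D) \<oplus> (\<alpha> \<ominus> d) \<otimes> D" using G by simp
  also have "\<dots> = A \<otimes> s \<ominus> x \<otimes> D \<ominus> D \<otimes> p1"
    unfolding s_def a_def using al d x p1c Ac Dc by algebra
  also have "\<dots> = \<ominus> (p \<oplus> D \<otimes> p1)" using As pq pc qc Dc p1c by algebra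
  finally have key: "(\<alpha> \<ominus> d) \<otimes> (s \<otimes> G \<oplus> D) = \<ominus> (p \<oplus> D \<otimes> p1)" .
  have "\<ominus> (p \<oplus> D \<otimes> p1) \<in> P" using pq p1 Dc by (intro P.a_inv_closed P.a_closed P.I_l_closed)
  then have "\<alpha> \<ominus> d \<in> P \<or> s \<otimes> G \<oplus> D \<in> P"
    using P.I_prime[of "\<alpha> \<ominus> d" "s \<otimes> G \<oplus> D"] key al d sc G Dc by auto
  then show ?thesis
  proof
    assume h: "\<alpha> \<ominus> d \<in> P"
    have "x = (\<ominus> (\<alpha> \<ominus> d) \<oplus> \<ominus> p1) \<oplus> s" unfolding s_def a_def using al d x p1c by algebra
    moreover have "\<ominus> (\<alpha> \<ominus> d) \<oplus> \<ominus> p1 \<in> P" using h p1 by (intro P.a_closed P.a_inv_closed)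
    ultimately show ?thesis using sQ set_add_mem by blast
  next
    assume h: "s \<otimes> G \<oplus> D \<in> P"
    have "D = (s \<otimes> G \<oplus> D) \<oplus> \<ominus> (s \<otimes> G)" using sc G Dc by algebra
    moreover have "\<ominus> (s \<otimes> G) \<in> Q" using sQ G by (intro Q.a_inv_closed Q.I_r_closed)
    ultimately show ?thesis using h set_add_mem D_def by metis
  qed
qed

lemma radical_claim:
  fixes n :: nat
  assumes n: "n > 1" and I: "ideal I R"
    and A: "\<And>x d. x \<in> carrier R \<Longrightarrow> d \<in> carrier R \<Longrightarrow> x \<otimes> d [^] (n - 1) \<in> I \<Longrightarrow> x \<in> I \<or> d [^] (n - 1) \<in> I"
  shows "e \<in> carrier R \<Longrightarrow> e [^] (k::nat) \<in> I \<Longrightarrow> e [^] (n - 1) \<in> I"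
proof (induction k rule: less_induct)
  case (less k)
  interpret I: ideal I R by fact
  show ?case
  proof (cases "k \<le> n - 1")
    case True
    have kk: "k + (n - 1 - k) = n - 1" using True by simp
    have "e [^] (n - 1) = e [^] k \<otimes> e [^] (n - 1 - k)" using nat_pow_mult[of e k "n - 1 - k"] less kk by simp
    then show ?thesis using I.I_r_closed less by simp
  next
    case False
    define i where "i = k - (n - 1)"
    have ik: "i < k" using False n i_def by simp
    have "e [^] k = e [^] i \<otimes> e [^] (n - 1)" using nat_pow_mult[of e i "n - 1"] less False i_def by simp
    then have "e [^] i \<in> I \<or> e [^] (n - 1) \<in> I" using A[of "e [^] i" e] less by simp
    then show ?thesis using less.IH[OF ik] less by blast
  qed
qed

lemma nth_root:
  fixes n :: nat
  assumes n: "n > 0" and cl: "n_adically_closed R n" and c: "c \<in> carrier R"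
  shows "\<exists>x\<in>carrier R. x [^] n = c"
proof -
  define cf where "cf = (\<lambda>i::nat. if i = 0 then \<ominus> c else \<zero>)"
  have "cf \<in> {..<n} \<rightarrow> carrier R" using c cf_def by auto
  then obtain x where x: "x \<in> carrier R"
    and e: "x [^] n \<oplus> (\<Oplus>i\<in>{..<n}. cf i \<otimes> x [^] i) = \<zero>"
    using cl unfolding n_adically_closed_def by blast
  have "(\<Oplus>i\<in>{..<n}. cf i \<otimes> x [^] i) = (\<Oplus>i\<in>{..<n}. if 0 = i then \<ominus> c \<otimes> x [^] i else \<zero>)"
    using x c by (intro finsum_cong) (auto simp: cf_def simp_implies_def)
  also have "\<dots> = \<ominus> c \<otimes> x [^] (0::nat)"
    using finsum_singleton[of 0 "{..<n}" "\<lambda>i. \<ominus> c \<otimes> x [^] i"] n x c by auto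
  also have "\<dots> = \<ominus> c" using c by simp
  finally have "x [^] n \<oplus> \<ominus> c = \<zero>" using e by simp
  then have "x [^] n = c" using x c
    by (metis a_minus_def add.inv_closed add.inv_solve_right' minus_equality nat_pow_closed r_neg1 minus_minus)
  then show ?thesis using x by blast
qed

end


theorem mainTheorem4:
  fixes R (structure) and n :: nat
  assumes "cring R"
    and "n > 1"
    and "n_adically_closed R n"
    and "\<And>p a b. primeideal p R \<Longrightarrow> a \<in> carrier R \<Longrightarrow> b \<in> carrier R \<Longrightarrow> a \<notin> p \<Longrightarrow> b \<in> p \<Longrightarrow>
           \<exists>\<alpha> \<in> carrier R - p. \<alpha> [^] n \<oplus> a \<otimes> \<alpha> [^] (n - 1) \<oplus> b = \<zero>"
    and "primeideal P R" and "primeideal Q R"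
  shows "set_add R P Q = carrier R \<or> primeideal (set_add R P Q) R"
proof -
  interpret cring R by fact
  interpret P: primeideal P R by fact
  interpret Q: primeideal Q R by fact
  show ?thesis
  proof (cases "P \<subseteq> Q")
    case True
    have "set_add R P Q = Q"
    proof
      show "set_add R P Q \<subseteq> Q" using True unfolding set_add_mem[symmetric]
        by (auto simp: set_add_mem intro!: Q.a_closed)
      show "Q \<subseteq> set_add R P Q"
      proof
        fix q assume q: "q \<in> Q"
        then have "q = \<zero> \<oplus> q" using Q.Icarr by simp
        then show "q \<in> set_add R P Q" using q P.zero_closed set_add_mem by blast
      qed
    qed
    then show ?thesis using assms(6) by simp
  next
    case False
    then obtain p0 where p0: "p0 \<in> P" "p0 \<notin> Q" by blast
    have I: "ideal (set_add R P Q) R" by (rule add_ideals[OF P.is_ideal Q.is_ideal])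
    interpret I: ideal "set_add R P Q" R by (rule I)
    have A: "\<And>x d. x \<in> carrier R \<Longrightarrow> d \<in> carrier R \<Longrightarrow> x \<otimes> d [^] (n - 1) \<in> set_add R P Q
        \<Longrightarrow> x \<in> set_add R P Q \<or> d [^] (n - 1) \<in> set_add R P Q"
      using lemmaA[OF assms(2) assms(4) assms(5) assms(6) p0] by blast
    have rad: "c \<in> set_add R P Q" if c: "c \<in> carrier R" "c [^] (n - 1) \<in> set_add R P Q" for c
    proof -
      obtain d where d: "d \<in> carrier R" "d [^] n = c" using nth_root[OF _ assms(3) c(1)] assms(2) by auto
      have "d [^] (n * (n - 1)) \<in> set_add R P Q" using c d nat_pow_pow[of d n "n - 1"] by simp
      then have "d [^] (n - 1) \<in> set_add R P Q"
        using radical_claim[OF assms(2) I A] d by blast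
      moreover have "d [^] n = d [^] (n - 1) \<otimes> d" using assms(2)
        by (metis Suc_diff_1 less_trans zero_less_one nat_pow_Suc)
      ultimately show ?thesis using d I.I_r_closed by metis
    qed
    show ?thesis
    proof (cases "set_add R P Q = carrier R")
      case True then show ?thesis by simp
    next
      case False
      have "primeideal (set_add R P Q) R"
      proof (rule primeidealI[OF I is_cring])
        show "carrier R \<noteq> set_add R P Q" using False by simp
        fix a b assume a: "a \<in> carrier R" and b: "b \<in> carrier R" and ab: "a \<otimes> b \<in> set_add R P Q"
        have nn: "n - 1 = Suc (n - 2)" using assms(2) by simp
        have "a \<otimes> b [^] (n - 1) = (a \<otimes> b) \<otimes> b [^] (n - 2)"
          unfolding nn nat_pow_Suc using a b by (simp add: m_ac)
        also have "\<dots> \<in> set_add R P Q" by (rule I.I_r_closed[OF ab]) (use b in simp)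
        finally have "a \<in> set_add R P Q \<or> b [^] (n - 1) \<in> set_add R P Q" using A a b by blast
        then show "a \<in> set_add R P Q \<or> b \<in> set_add R P Q" using rad b by blast
      qed
      then show ?thesis by simp
    qed
  qed
qed

end
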